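(* Let $\Phi\colon\mathbb{R}^d\to\mathbb{R}$ be a continuously differentiable convex function with $(L_\Phi,v)$-Hölder continuous gradient ($\|\nabla\Phi(y)-\nabla\Phi(x)\|\le L_\Phi\|y-x\|^v$ for all $x,y$, with $L_\Phi>0$, $v\in(0,1]$), let $h\colon\mathbb{R}^d\to\mathbb{R}$ be an $L_h$-Lipschitz continuous convex function, and let $f=\Phi+h$. Assume $f$ has a minimizer $x^*$ over $\mathbb{R}^d$, with $f^*=f(x^* )$. Let $g_h(x)\in\partial h(x)$ be an arbitrary subgradient, and consider the iteration $$x_{k+1}=x_k-\alpha_k\frac{\nabla\Phi(x_k)+g_h(x_k)}{\|\nabla\Phi(x_k)+g_h(x_k)\|}$$ from $x_0\in\mathbb{R}^d$, with constant step size $\alpha_k=\|x_0-x^*\|/\sqrt{T+1}$ for a fixed $T\ge0$. Then $$\min_{k=0,\dots,T}\{f(x_k)-f^*\}\le\frac{L_\Phi\|x_0-x^*\|^{v+1}}{(v+1)(T+1)^{(v+1)/2}}+\frac{2L_h\|x_0-x^*\|}{\sqrt{T+1}}.$$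
   Context: $\partial h(x)=\{g: h(y)\ge h(x)+g^T(y-x)\ \forall y\in\mathbb{R}^d\}$. The iteration is well-defined until a minimizer is found (the denominator vanishes only at a minimizer, in which case the bound holds trivially). *)

theory Defs
  imports "HOL-Analysis.Analysis"
begin

definition subdifferential :: "('a::real_inner \<Rightarrow> real) \<Rightarrow> 'a \<Rightarrow> 'a set" where
  "subdifferential h x = {g. \<forall>y. h y \<ge> h x + g \<bullet> (y - x)}"

end

theory Submission
  imports Defs
begin

lemma line_deriv:
  fixes \<Phi> :: "'a::euclidean_space \<Rightarrow> real" and G :: "'a \<Rightarrow> 'a"
  assumes deriv: "\<And>y. (\<Phi> has_derivative (\<lambda>u. G y \<bullet> u)) (at y)"
  shows "((\<lambda>t. \<Phi> (x + t *\<^sub>R d)) has_real_derivative (G (x + t *\<^sub>R d) \<bullet> d)) (at t within S)"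
proof -
  have "((\<lambda>t. x + t *\<^sub>R d) has_derivative (\<lambda>s. s *\<^sub>R d)) (at t within S)"
    by (auto intro!: derivative_eq_intros)
  from has_derivative_compose[OF this deriv]
  have "((\<lambda>t. \<Phi> (x + t *\<^sub>R d)) has_derivative (\<lambda>s. G (x + t *\<^sub>R d) \<bullet> (s *\<^sub>R d))) (at t within S)" .
  moreover have "(\<lambda>s. G (x + t *\<^sub>R d) \<bullet> (s *\<^sub>R d)) = (*) (G (x + t *\<^sub>R d) \<bullet> d)"
    by (auto simp: fun_eq_iff)
  ultimately show ?thesis by (simp add: has_field_derivative_def)
qed

lemma grad_ineq:
  fixes \<Phi> :: "'a::euclidean_space \<Rightarrow> real" and G :: "'a \<Rightarrow> 'a"
  assumes deriv: "\<And>y. (\<Phi> has_derivative (\<lambda>u. G y \<bullet> u)) (at y)"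
    and conv: "convex_on UNIV \<Phi>"
  shows "\<Phi> x + G x \<bullet> (y - x) \<le> \<Phi> y"
proof -
  define \<phi> where "\<phi> t = \<Phi> (x + t *\<^sub>R (y - x))" for t
  have c: "convex_on UNIV \<phi>"
  proof (rule convex_onI)
    fix t a b :: real assume "t > 0" "t < 1"
    have "x + ((1 - t) *\<^sub>R a + t *\<^sub>R b) *\<^sub>R (y - x) = (1 - t) *\<^sub>R (x + a *\<^sub>R (y - x)) + t *\<^sub>R (x + b *\<^sub>R (y - x))"
      by (simp add: algebra_simps)
    then show "\<phi> ((1 - t) *\<^sub>R a + t *\<^sub>R b) \<le> (1 - t) * \<phi> a + t * \<phi> b"
      unfolding \<phi>_def using convex_onD[OF conv, of t] \<open>t > 0\<close> \<open>t < 1\<close> by simp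
  qed auto
  have d: "(\<phi> has_real_derivative (G x \<bullet> (y - x))) (at 0 within UNIV)"
    unfolding \<phi>_def using line_deriv[OF deriv, of x "y - x" 0 UNIV] by simp
  have "\<phi> 1 - \<phi> 0 \<ge> (G x \<bullet> (y - x)) * (1 - 0)"
    by (rule convex_on_imp_above_tangent[OF c]) (use d in auto)
  then show ?thesis unfolding \<phi>_def by simp
qed

lemma descent:
  fixes \<Phi> :: "'a::euclidean_space \<Rightarrow> real" and G :: "'a \<Rightarrow> 'a"
  assumes deriv: "\<And>y. (\<Phi> has_derivative (\<lambda>u. G y \<bullet> u)) (at y)"
    and v: "0 < v"
    and holder: "\<And>y z. norm (G z - G y) \<le> L * norm (z - y) powr v"
  shows "\<Phi> y \<le> \<Phi> x + G x \<bullet> (y - x) + L / (v + 1) * norm (y - x) powr (v + 1)"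
proof -
  define d where "d = y - x"
  define C where "C = L * norm d powr (v + 1)"
  define g where "g t = \<Phi> (x + t *\<^sub>R d) - t * (G x \<bullet> d) - C / (v + 1) * t powr (v + 1)" for t
  have cont\<Phi>: "continuous_on {0..1} (\<lambda>t. \<Phi> (x + t *\<^sub>R d))"
    using line_deriv[OF deriv] by (meson DERIV_continuous continuous_at_imp_continuous_on)
  have "continuous_on {0..1} g"
    unfolding g_def using v
    by (intro continuous_intros cont\<Phi> continuous_on_powr') auto
  moreover have "\<forall>t. 0 < t \<and> t < 1 \<longrightarrow> (g has_real_derivative
      (G (x + t *\<^sub>R d) \<bullet> d - G x \<bullet> d - C / (v + 1) * ((v + 1) * t powr v))) (at t)"
  proof (intro allI impI)
    fix t :: real assume t: "0 < t \<and> t < 1"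
    have "((\<lambda>t. t powr (v + 1)) has_real_derivative (v + 1) * t powr (v + 1 - 1)) (at t)"
      using t by (intro has_real_derivative_powr) auto
    then have "((\<lambda>t. t powr (v + 1)) has_real_derivative (v + 1) * t powr v) (at t)" by simp
    then show "(g has_real_derivative
      (G (x + t *\<^sub>R d) \<bullet> d - G x \<bullet> d - C / (v + 1) * ((v + 1) * t powr v))) (at t)"
      using t unfolding g_def
      by (auto intro!: derivative_eq_intros line_deriv[OF deriv] DERIV_cmult)
  qed
  ultimately obtain z l where z: "0 < z" "z < 1" and dz: "(g has_real_derivative l) (at z)"
    and eq: "g 1 - g 0 = (1 - 0) * l"
    using MVT[of 0 1 g] by (metis real_differentiable_def zero_less_one)
  have l: "l = G (x + z *\<^sub>R d) \<bullet> d - G x \<bullet> d - C * z powr v"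
    using DERIV_unique[OF dz] \<open>\<forall>t. _\<close> z v by force
  have "(G (x + z *\<^sub>R d) - G x) \<bullet> d \<le> norm (G (x + z *\<^sub>R d) - G x) * norm d"
    by (rule norm_cauchy_schwarz)
  also have "\<dots> \<le> L * norm (z *\<^sub>R d) powr v * norm d"
    using holder[of x "x + z *\<^sub>R d"] holder[of "x + z *\<^sub>R d" x] by (intro mult_right_mono) auto
  also have "\<dots> = z powr v * C"
    using z unfolding C_def by (simp add: powr_mult powr_add)
  finally have "l \<le> 0" unfolding l by (simp add: inner_diff_left algebra_simps)
  then have "g 1 \<le> g 0" using eq by simp
  then show ?thesis unfolding g_def by (simp add: C_def d_def)
qed

lemma grad_opt:
  fixes \<Phi> h :: "'a::euclidean_space \<Rightarrow> real" and G :: "'a \<Rightarrow> 'a"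
  assumes deriv: "\<And>y. (\<Phi> has_derivative (\<lambda>u. G y \<bullet> u)) (at y)"
    and v: "0 < v"
    and holder: "\<And>y z. norm (G z - G y) \<le> L * norm (z - y) powr v"
    and lip_h: "Lh-lipschitz_on UNIV h"
    and minimizer: "\<And>y. \<Phi> xs + h xs \<le> \<Phi> y + h y"
  shows "norm (G xs) \<le> Lh"
proof -
  define p where "p = G xs"
  define n where "n = norm p"
  define C where "C = L / (v + 1) * n powr (v + 1)"
  have Lh0: "0 \<le> Lh" using lip_h by (simp add: lipschitz_on_def)
  have key: "n^2 \<le> C * t powr v + Lh * n" if t: "t > 0" for t :: real
  proof -
    define y where "y = xs - t *\<^sub>R p"
    have "\<Phi> y \<le> \<Phi> xs + G xs \<bullet> (y - xs) + L / (v + 1) * norm (y - xs) powr (v + 1)"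
      by (rule descent[OF deriv v holder])
    also have "G xs \<bullet> (y - xs) = - t * n^2"
      unfolding y_def p_def n_def by (simp add: power2_norm_eq_inner)
    also have "L / (v + 1) * norm (y - xs) powr (v + 1) = C * (t * t powr v)"
      unfolding y_def C_def n_def using t v by (simp add: powr_mult powr_add)
    finally have 1: "\<Phi> y \<le> \<Phi> xs - t * n^2 + C * (t * t powr v)" by simp
    have "dist (h y) (h xs) \<le> Lh * dist y xs"
      using lip_h by (simp add: lipschitz_on_def)
    also have "dist y xs = t * n" unfolding y_def n_def dist_norm using t by simp
    finally have 2: "h y - h xs \<le> Lh * (t * n)" by (simp add: dist_real_def)
    have "0 \<le> t * (C * t powr v + Lh * n - n^2)"
      using minimizer[of y] 1 2 by (simp add: algebra_simps)
    then show ?thesis using t by (simp add: zero_le_mult_iff)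
  qed
  have lim: "((\<lambda>t. C * t powr v + Lh * n) \<longlongrightarrow> C * 0 + Lh * n) (at_right 0)"
    by (intro tendsto_intros tendsto_zero_powrI[of "\<lambda>t. t" _ "\<lambda>_. v"])
       (auto simp: v eventually_at_right_less eventually_mono[OF eventually_at_right_less])
  have "n^2 \<le> C * 0 + Lh * n"
    by (rule tendsto_lowerbound[OF lim]) (auto intro: eventually_mono[OF eventually_at_right_less] key)
  then have "n * n \<le> Lh * n" by (simp add: power2_eq_square)
  then show ?thesis using Lh0 unfolding n_def p_def
    by (cases "norm (G xs) = 0") auto
qed

lemma norm_sq_expand:
  fixes a u :: "'a::real_inner"
  shows "norm (a - c *\<^sub>R u)^2 = norm a^2 - 2*c*(a \<bullet> u) + c^2 * norm u^2"
proof -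
  have "norm (a - c *\<^sub>R u)^2 = (a - c *\<^sub>R u) \<bullet> (a - c *\<^sub>R u)" by (rule power2_norm_eq_inner)
  also have "\<dots> = a \<bullet> a - 2*c*(a \<bullet> u) + c^2 * (u \<bullet> u)"
    by (simp add: inner_diff_left inner_diff_right inner_commute algebra_simps power2_eq_square)
  finally show ?thesis by (simp add: power2_norm_eq_inner)
qed

lemma subgrad_f:
  fixes \<Phi> h :: "'a::euclidean_space \<Rightarrow> real" and G gh :: "'a \<Rightarrow> 'a"
  assumes deriv: "\<And>y. (\<Phi> has_derivative (\<lambda>u. G y \<bullet> u)) (at y)"
    and conv: "convex_on UNIV \<Phi>"
    and subgrad: "\<And>y. gh y \<in> subdifferential h y"
  shows "\<Phi> z + h z + (G z + gh z) \<bullet> (y - z) \<le> \<Phi> y + h y"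
proof -
  have "h z + gh z \<bullet> (y - z) \<le> h y" using subgrad[of z] by (auto simp: subdifferential_def)
  then show ?thesis using grad_ineq[OF deriv conv, of z y] by (simp add: inner_add_left)
qed

lemma per_iter:
  fixes \<Phi> h :: "'a::euclidean_space \<Rightarrow> real" and G gh :: "'a \<Rightarrow> 'a"
  assumes deriv: "\<And>y. (\<Phi> has_derivative (\<lambda>u. G y \<bullet> u)) (at y)"
    and conv: "convex_on UNIV \<Phi>"
    and v: "0 < v"
    and holder: "\<And>y z. norm (G z - G y) \<le> L * norm (z - y) powr v"
    and lip_h: "Lh-lipschitz_on UNIV h"
    and minimizer: "\<And>y. \<Phi> xs + h xs \<le> \<Phi> y + h y"
    and subgrad: "\<And>y. gh y \<in> subdifferential h y"
    and nz: "G z + gh z \<noteq> 0"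
  shows "0 \<le> (G z + gh z) \<bullet> (z - xs) / norm (G z + gh z)"
    and "\<Phi> z + h z - (\<Phi> xs + h xs) \<le> L / (v + 1) * ((G z + gh z) \<bullet> (z - xs) / norm (G z + gh z)) powr (v + 1)
          + 2 * Lh * ((G z + gh z) \<bullet> (z - xs) / norm (G z + gh z))"
proof -
  define g where "g = G z + gh z"
  define w where "w = g \<bullet> (z - xs) / norm g"
  have ng: "norm g > 0" using nz unfolding g_def by simp
  have sg: "\<And>y. \<Phi> z + h z + g \<bullet> (y - z) \<le> \<Phi> y + h y"
    unfolding g_def by (rule subgrad_f[OF deriv conv subgrad])
  have "g \<bullet> (z - xs) \<ge> 0" using sg[of xs] minimizer[of z]
    by (simp add: inner_diff_right)
  then have w0: "0 \<le> w" unfolding w_def using ng by simp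
  define y where "y = xs + (w / norm g) *\<^sub>R g"
  have "g \<bullet> (y - z) = g \<bullet> (xs - z) + w / norm g * (g \<bullet> g)"
    unfolding y_def by (simp add: inner_diff_right inner_add_right algebra_simps)
  also have "g \<bullet> g = norm g * norm g" by (simp add: power2_norm_eq_inner[symmetric] power2_eq_square)
  also have "w / norm g * (norm g * norm g) = g \<bullet> (z - xs)" unfolding w_def using ng by simp
  finally have "g \<bullet> (y - z) = 0" by (simp add: inner_diff_right)
  then have fy: "\<Phi> z + h z \<le> \<Phi> y + h y" using sg[of y] by simp
  have ny: "norm (y - xs) = w" unfolding y_def using ng w0 by simp
  have "\<Phi> y \<le> \<Phi> xs + G xs \<bullet> (y - xs) + L / (v + 1) * norm (y - xs) powr (v + 1)"
    by (rule descent[OF deriv v holder])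
  moreover have "G xs \<bullet> (y - xs) \<le> Lh * w"
  proof -
    have "G xs \<bullet> (y - xs) \<le> norm (G xs) * norm (y - xs)" by (rule norm_cauchy_schwarz)
    also have "\<dots> \<le> Lh * w" unfolding ny
      using grad_opt[OF deriv v holder lip_h minimizer] w0 by (rule mult_right_mono)
    finally show ?thesis .
  qed
  moreover have "h y - h xs \<le> Lh * w"
  proof -
    have "dist (h y) (h xs) \<le> Lh * dist y xs"
      using lip_h by (simp add: lipschitz_on_def)
    then show ?thesis using ny by (simp add: dist_real_def dist_norm)
  qed
  ultimately have "\<Phi> z + h z - (\<Phi> xs + h xs) \<le> L / (v + 1) * w powr (v + 1) + 2 * Lh * w"
    using fy unfolding ny by simp
  then show "\<Phi> z + h z - (\<Phi> xs + h xs) \<le> L / (v + 1) * ((G z + gh z) \<bullet> (z - xs) / norm (G z + gh z)) powr (v + 1)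
          + 2 * Lh * ((G z + gh z) \<bullet> (z - xs) / norm (G z + gh z))"
    unfolding w_def g_def .
  show "0 \<le> (G z + gh z) \<bullet> (z - xs) / norm (G z + gh z)" using w0 unfolding w_def g_def .
qed

theorem corollary2p4:
  fixes \<Phi> h :: "'a::euclidean_space \<Rightarrow> real"
    and grad\<Phi> gh :: "'a \<Rightarrow> 'a"
    and L\<Phi> Lh v :: real
    and xs :: 'a
    and x :: "nat \<Rightarrow> 'a"
    and T :: nat
  assumes deriv: "\<And>y. (\<Phi> has_derivative (\<lambda>u. grad\<Phi> y \<bullet> u)) (at y)"
    and cont_grad: "continuous_on UNIV grad\<Phi>"
    and conv\<Phi>: "convex_on UNIV \<Phi>"
    and L\<Phi>_pos: "L\<Phi> > 0"
    and v_range: "0 < v" "v \<le> 1"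
    and holder: "\<And>y z. norm (grad\<Phi> z - grad\<Phi> y) \<le> L\<Phi> * norm (z - y) powr v"
    and lip_h: "Lh-lipschitz_on UNIV h"
    and conv_h: "convex_on UNIV h"
    and minimizer: "\<And>y. \<Phi> xs + h xs \<le> \<Phi> y + h y"
    and subgrad: "\<And>y. gh y \<in> subdifferential h y"
    and iter: "\<And>k. x (Suc k) = x k - (norm (x 0 - xs) / sqrt (real T + 1)) *\<^sub>R
                 ((1 / norm (grad\<Phi> (x k) + gh (x k))) *\<^sub>R (grad\<Phi> (x k) + gh (x k)))"
  shows "Min ((\<lambda>k. (\<Phi> (x k) + h (x k)) - (\<Phi> xs + h xs)) ` {0..T})
           \<le> L\<Phi> * norm (x 0 - xs) powr (v + 1) / ((v + 1) * (real T + 1) powr ((v + 1) / 2))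
             + 2 * Lh * norm (x 0 - xs) / sqrt (real T + 1)"
proof -
  define f where "f y = \<Phi> y + h y" for y
  define R where "R = norm (x 0 - xs)"
  define \<alpha> where "\<alpha> = R / sqrt (real T + 1)"
  define g where "g k = grad\<Phi> (x k) + gh (x k)" for k
  define RHS where "RHS = L\<Phi> * norm (x 0 - xs) powr (v + 1) / ((v + 1) * (real T + 1) powr ((v + 1) / 2))
             + 2 * Lh * norm (x 0 - xs) / sqrt (real T + 1)"
  have Lh0: "0 \<le> Lh" using lip_h by (simp add: lipschitz_on_def)
  have RHS0: "0 \<le> RHS" unfolding RHS_def using L\<Phi>_pos v_range Lh0 by (intro add_nonneg_nonneg) auto
  have sq: "sqrt (real T + 1) > 0" by simp
  have "\<exists>k\<le>T. f (x k) - f xs \<le> RHS"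
  proof (cases "\<exists>k\<le>T. g k = 0")
    case True
    then obtain k where k: "k \<le> T" "g k = 0" by auto
    have "f (x k) \<le> f xs" using subgrad_f[OF deriv conv\<Phi> subgrad, of "x k" xs] k
      unfolding f_def g_def by simp
    then show ?thesis using k RHS0 by auto
  next
    case False
    then have nz: "\<And>k. k \<le> T \<Longrightarrow> g k \<noteq> 0" by auto
    show ?thesis
    proof (cases "R = 0")
      case True
      then show ?thesis using RHS0 unfolding R_def by (intro exI[of _ 0]) auto
    next
      case False
      then have R0: "R > 0" unfolding R_def by simp
      have \<alpha>0: "\<alpha> > 0" unfolding \<alpha>_def using R0 by simp
      define w where "w k = g k \<bullet> (x k - xs) / norm (g k)" for k
      have rec: "norm (x (Suc k) - xs)^2 = norm (x k - xs)^2 - 2 * \<alpha> * w k + \<alpha>^2" if "k \<le> T" for k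
      proof -
        define u where "u = (1 / norm (g k)) *\<^sub>R g k"
        have nu: "norm u = 1" unfolding u_def using nz[OF that] by simp
        have xe: "x (Suc k) - xs = (x k - xs) - \<alpha> *\<^sub>R u"
          using iter[of k] unfolding u_def \<alpha>_def R_def g_def by simp
        have wk: "w k = (x k - xs) \<bullet> u" unfolding w_def u_def by (simp add: inner_commute)
        have "norm ((x k - xs) - \<alpha> *\<^sub>R u)^2 = norm (x k - xs)^2 - 2 * \<alpha> * ((x k - xs) \<bullet> u) + \<alpha>^2 * norm u ^2"
          by (rule norm_sq_expand)
        moreover have "norm (x (Suc k) - xs)^2 = norm ((x k - xs) - \<alpha> *\<^sub>R u)^2" by (subst xe) (rule refl)
        ultimately show ?thesis using wk nu by simp
      qed
      have tel: "norm (x n - xs)^2 = R^2 - 2 * \<alpha> * (\<Sum>k<n. w k) + real n * \<alpha>^2" if "n \<le> Suc T" for n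
        using that
      proof (induction n)
        case 0
        then show ?case unfolding R_def by simp
      next
        case (Suc n)
        then show ?case using rec[of n] by (simp add: algebra_simps)
      qed
      have a2: "real (Suc T) * \<alpha>^2 = R^2"
        unfolding \<alpha>_def by (simp add: power_divide add.commute)
      have "0 \<le> R^2 - 2 * \<alpha> * (\<Sum>k<Suc T. w k) + real (Suc T) * \<alpha>^2"
        using tel[of "Suc T"] by (metis order_refl zero_le_power2)
      then have "\<alpha> * (\<Sum>k<Suc T. w k) \<le> R^2" using a2 by simp
      have "\<exists>k\<le>T. w k \<le> \<alpha>"
      proof (rule ccontr)
        assume H: "\<not> ?thesis"
        have "\<And>k. k \<in> {..<Suc T} \<Longrightarrow> \<alpha> < w k" by (meson H lessThan_iff less_Suc_eq_le not_le)
        then have "(\<Sum>k<Suc T. \<alpha>) < (\<Sum>k<Suc T. w k)"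
          by (intro sum_strict_mono) auto
        then have "\<alpha> * (real (Suc T) * \<alpha>) < \<alpha> * (\<Sum>k<Suc T. w k)" using \<alpha>0 by simp
        then show False using a2 \<open>\<alpha> * (\<Sum>k<Suc T. w k) \<le> R^2\<close> by (simp add: power2_eq_square algebra_simps)
      qed
      then obtain k where k: "k \<le> T" "w k \<le> \<alpha>" by auto
      have w0: "0 \<le> w k"
        using per_iter(1)[OF deriv conv\<Phi> v_range(1) holder lip_h minimizer subgrad, of "x k"] nz[OF k(1)]
        unfolding w_def g_def by simp
      have "f (x k) - f xs \<le> L\<Phi> / (v + 1) * w k powr (v + 1) + 2 * Lh * w k"
        using per_iter(2)[OF deriv conv\<Phi> v_range(1) holder lip_h minimizer subgrad, of "x k"] nz[OF k(1)]
        unfolding w_def g_def f_def by simp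
      also have "\<dots> \<le> L\<Phi> / (v + 1) * \<alpha> powr (v + 1) + 2 * Lh * \<alpha>"
        using k w0 v_range L\<Phi>_pos Lh0
        by (intro add_mono mult_left_mono powr_mono2) auto
      also have "\<alpha> powr (v + 1) = R powr (v + 1) / (real T + 1) powr ((v + 1) / 2)"
      proof -
        have "sqrt (real T + 1) powr (v + 1) = (real T + 1) powr ((v + 1) / 2)"
          by (simp add: powr_half_sqrt[symmetric] powr_powr)
        then show ?thesis unfolding \<alpha>_def by (simp add: powr_divide)
      qed
      also have "L\<Phi> / (v + 1) * (R powr (v + 1) / (real T + 1) powr ((v + 1) / 2)) + 2 * Lh * \<alpha> = RHS"
        unfolding RHS_def R_def \<alpha>_def by simp
      finally show ?thesis using k by auto
    qed
  qed
  then obtain k where k: "k \<le> T" "f (x k) - f xs \<le> RHS" by auto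
  have "Min ((\<lambda>k. (\<Phi> (x k) + h (x k)) - (\<Phi> xs + h xs)) ` {0..T}) \<le> f (x k) - f xs"
    unfolding f_def using k by (intro Min_le) auto
  then show ?thesis using k unfolding RHS_def by simp
qed

end
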